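(* Fix $i,j\in I$ with $\tau(i)=i\neq j$. For any $m,n\in\mathbb{N}$ there exists a uniquely determined polynomial $w_{m,n}(x,y)=\sum_{r,s}b_{rs}x^ry^s\in\mathbb{K}[x,y]$ such that, in $\mathcal{A}$, $$F_i^mF_jF_i^n=\sum_{r,s}b_{rs}\,F_i^{\circledast r}\circledast F_j\circledast F_i^{\circledast s},$$ where the left side is the product in the free algebra $T(V^-)$ and $F_i^{\circledast r}$ is the $r$-th power with respect to $\circledast$.
   Context: Let $I$ be a finite set and $(a_{kl})_{k,l\in I}$ a symmetrizable generalized Cartan matrix, with relatively prime positive integers $d_k$ such that $(d_ka_{kl})$ is symmetric. Let $Q=\bigoplus_{k\in I}\mathbb{Z}\alpha_k$ with symmetric bilinear form $(\alpha_k,\alpha_l)=d_ka_{kl}$ and $Q^+=\bigoplus_k\mathbb{N}\alpha_k$. Let $\mathbb{K}$ be a field of characteristic zero, $q\in\mathbb{K}^\times$ with $q^{2d_k}\neq1$ for all $k$, and $q_k=q^{d_k}$. Let $\tau:I\to I$ be a bijection with $\tau^2=\mathrm{id}$ and $a_{\tau(k)\tau(l)}=a_{kl}$, and let $(c_k)_{k\in I}\in(\mathbb{K}^\times)^I$ with $c_k=c_{\tau(k)}$ whenever $a_{k\tau(k)}=0$. Let $T(V^-)=\mathbb{K}\langle F_k:k\in I\rangle$ be the free algebra, graded by $-Q^+$ with $F_k$ of degree $-\alpha_k$. Let $\partial_k^L,\partial_k^R:T(V^-)\to T(V^-)$ be the linear maps with $\partial_k^L(F_l)=\partial_k^R(F_l)=\delta_{kl}$,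 $\partial_k^L(1)=\partial_k^R(1)=0$, and, for $f$ of degree $-\mu$ and $g$ of degree $-\nu$, $\partial_k^R(fg)=q^{(\alpha_k,\nu)}\partial_k^R(f)g+f\partial_k^R(g)$, $\partial_k^L(fg)=\partial_k^L(f)g+q^{(\alpha_k,\mu)}f\partial_k^L(g)$. Let $G_\theta\subseteq Q$ be the subgroup generated by $\alpha_k-\alpha_{\tau(k)}$, $k\in I$, and let $\mathcal{A}=H_\theta\ltimes T(V^-)$ be the $\mathbb{K}$-algebra generated by $T(V^-)$ and elements $K_\mu$ ($\mu\in G_\theta$) subject to $K_0=1$, $K_\mu K_\nu=K_{\mu+\nu}$, $K_\mu F_k=q^{-(\mu,\alpha_k)}F_kK_\mu$; write $K_{\tau(k)}K_k^{-1}=K_{\alpha_{\tau(k)}-\alpha_k}$ and let $H_\theta=\mathrm{span}\{K_\mu\}$. By earlier work there is a unique associative product $\circledast$ on $\mathcal{A}$ with $h\circledast g=hg$, $g\circledast h=gh$ for $h\in H_\theta$, $g\in T(V^-)$, and $F_k\circledast g=F_kg-\frac{c_kq^{(\alpha_k,\alpha_{\tau(k)})}}{q_k-q_k^{-1}}K_{\tau(k)}K_k^{-1}\partial^L_{\tau(k)}(g)$ for all $k\in I$, $g\in T(V^-)$. *)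

theory Defs
  imports Main
begin

text \<open>Index set I: a finite type 'i. Root lattice Q = ('i => int) (coordinates w.r.t. simple roots).
 Elements of A = H_theta \<ltimes> T(V^-) are represented by their coefficient functions
 X :: ('i => int) => 'i list => 'k, where X mu w is the coefficient of K_mu F_w
 (F_w the word monomial F_{w_1}...F_{w_n}).\<close>

type_synonym ('i,'k) elA = "('i \<Rightarrow> int) \<Rightarrow> 'i list \<Rightarrow> 'k"

definition gen_cartan :: "('i \<Rightarrow> 'i \<Rightarrow> int) \<Rightarrow> bool" where
  "gen_cartan a \<longleftrightarrow> (\<forall>k. a k k = 2) \<and> (\<forall>k l. k \<noteq> l \<longrightarrow> a k l \<le> 0)
     \<and> (\<forall>k l. a k l = 0 \<longleftrightarrow> a l k = 0)"

definition symmetrizer :: "('i \<Rightarrow> 'i \<Rightarrow> int) \<Rightarrow> ('i \<Rightarrow> nat) \<Rightarrow> bool" where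
  "symmetrizer a d \<longleftrightarrow> (\<forall>k. d k > 0) \<and> Gcd (range d) = 1
     \<and> (\<forall>k l. int (d k) * a k l = int (d l) * a l k)"

definition zeroQ :: "'i \<Rightarrow> int" where "zeroQ = (\<lambda>_. 0)"

definition sroot :: "'i \<Rightarrow> ('i \<Rightarrow> int)" where
  "sroot k = (\<lambda>l. if l = k then 1 else 0)"

definition bform :: "('i::finite \<Rightarrow> 'i \<Rightarrow> int) \<Rightarrow> ('i \<Rightarrow> nat) \<Rightarrow> ('i \<Rightarrow> int) \<Rightarrow> ('i \<Rightarrow> int) \<Rightarrow> int" where
  "bform a d \<mu> \<nu> = (\<Sum>k\<in>UNIV. \<Sum>l\<in>UNIV. \<mu> k * \<nu> l * int (d k) * a k l)"

text \<open>weight nu of a word: F_w has degree - wt w\<close>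
definition wt :: "'i list \<Rightarrow> ('i \<Rightarrow> int)" where
  "wt w = (\<lambda>l. int (count_list w l))"

definition Gtheta :: "('i::finite \<Rightarrow> 'i) \<Rightarrow> ('i \<Rightarrow> int) set" where
  "Gtheta \<tau> = {\<mu>. \<exists>n::'i \<Rightarrow> int. \<mu> = (\<lambda>l. \<Sum>k\<in>UNIV. n k * (sroot k l - sroot (\<tau> k) l))}"

definition Acar :: "('i::finite \<Rightarrow> 'i) \<Rightarrow> ('i,'k::zero) elA set" where
  "Acar \<tau> = {X. finite {(\<mu>,w). X \<mu> w \<noteq> 0} \<and> (\<forall>\<mu> w. X \<mu> w \<noteq> 0 \<longrightarrow> \<mu> \<in> Gtheta \<tau>)}"

definition Tcar :: "('i,'k::zero) elA set" where
  "Tcar = {X. finite {(\<mu>,w). X \<mu> w \<noteq> 0} \<and> (\<forall>\<mu> w. X \<mu> w \<noteq> 0 \<longrightarrow> \<mu> = zeroQ)}"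

definition Hcar :: "('i::finite \<Rightarrow> 'i) \<Rightarrow> ('i,'k::zero) elA set" where
  "Hcar \<tau> = {X \<in> Acar \<tau>. \<forall>\<mu> w. X \<mu> w \<noteq> 0 \<longrightarrow> w = []}"

definition oneA :: "('i,'k::{zero,one}) elA" where
  "oneA = (\<lambda>\<mu> w. if \<mu> = zeroQ \<and> w = [] then 1 else 0)"

definition monoA :: "'i list \<Rightarrow> ('i,'k::{zero,one}) elA" where
  "monoA u = (\<lambda>\<mu> w. if \<mu> = zeroQ \<and> w = u then 1 else 0)"

definition Fel :: "'i \<Rightarrow> ('i,'k::{zero,one}) elA" where
  "Fel k = monoA [k]"

definition addA :: "('i,'k::plus) elA \<Rightarrow> ('i,'k) elA \<Rightarrow> ('i,'k) elA" where
  "addA X Y = (\<lambda>\<mu> w. X \<mu> w + Y \<mu> w)"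

definition smultA :: "'k::times \<Rightarrow> ('i,'k) elA \<Rightarrow> ('i,'k) elA" where
  "smultA c X = (\<lambda>\<mu> w. c * X \<mu> w)"

text \<open>product h g in A for h in H_theta, g in T(V^-)\<close>
definition HTmult :: "('i,'k::times) elA \<Rightarrow> ('i,'k) elA \<Rightarrow> ('i,'k) elA" where
  "HTmult h g = (\<lambda>\<nu> w. h \<nu> [] * g zeroQ w)"

text \<open>product g h in A for g in T(V^-), h in H_theta, using F_k K_nu = q^((nu,alpha_k)) K_nu F_k\<close>
definition THmult :: "('i::finite \<Rightarrow> 'i \<Rightarrow> int) \<Rightarrow> ('i \<Rightarrow> nat) \<Rightarrow> 'k::field
     \<Rightarrow> ('i,'k) elA \<Rightarrow> ('i,'k) elA \<Rightarrow> ('i,'k) elA" where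
  "THmult a d q g h = (\<lambda>\<nu> w. q powi bform a d \<nu> (wt w) * g zeroQ w * h \<nu> [])"

definition Fmul :: "'i \<Rightarrow> ('i list \<Rightarrow> 'k::zero) \<Rightarrow> ('i list \<Rightarrow> 'k)" where
  "Fmul k g = (\<lambda>w. case w of [] \<Rightarrow> 0 | l # u \<Rightarrow> if l = k then g u else 0)"

text \<open>the twisted derivation partial^L_k on coefficient functions:
  partial^L_k (F_{l_1} ... F_{l_n}) = sum over p with l_p = k of
  q^((alpha_k, alpha_{l_1}+...+alpha_{l_{p-1}})) F_{l_1}..(omit l_p)..F_{l_n},
  which is the unique linear map with the stated twisted Leibniz rule.\<close>
definition dL :: "('i::finite \<Rightarrow> 'i \<Rightarrow> int) \<Rightarrow> ('i \<Rightarrow> nat) \<Rightarrow> 'k::field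
     \<Rightarrow> 'i \<Rightarrow> ('i list \<Rightarrow> 'k) \<Rightarrow> ('i list \<Rightarrow> 'k)" where
  "dL a d q k g = (\<lambda>w. \<Sum>p\<in>{0..length w}.
      q powi bform a d (sroot k) (wt (take p w)) * g (take p w @ k # drop p w))"

definition Fstar_rhs :: "('i::finite \<Rightarrow> 'i \<Rightarrow> int) \<Rightarrow> ('i \<Rightarrow> nat) \<Rightarrow> 'k::field
     \<Rightarrow> ('i \<Rightarrow> 'i) \<Rightarrow> ('i \<Rightarrow> 'k) \<Rightarrow> 'i \<Rightarrow> ('i,'k) elA \<Rightarrow> ('i,'k) elA" where
  "Fstar_rhs a d q \<tau> c k g = (\<lambda>\<nu> w.
      (if \<nu> = zeroQ then Fmul k (g zeroQ) w else 0)
    - (if \<nu> = (\<lambda>l. sroot (\<tau> k) l - sroot k l) then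
         c k * q powi bform a d (sroot k) (sroot (\<tau> k)) / (q ^ d k - inverse (q ^ d k))
         * dL a d q (\<tau> k) (g zeroQ) w
       else 0))"

primrec starpow :: "(('i,'k::{zero,one}) elA \<Rightarrow> ('i,'k) elA \<Rightarrow> ('i,'k) elA) \<Rightarrow> ('i,'k) elA \<Rightarrow> nat \<Rightarrow> ('i,'k) elA" where
  "starpow st X 0 = oneA"
| "starpow st X (Suc r) = st X (starpow st X r)"

definition is_star_product :: "('i::finite \<Rightarrow> 'i \<Rightarrow> int) \<Rightarrow> ('i \<Rightarrow> nat) \<Rightarrow> 'k::field
     \<Rightarrow> ('i \<Rightarrow> 'i) \<Rightarrow> ('i \<Rightarrow> 'k) \<Rightarrow> (('i,'k) elA \<Rightarrow> ('i,'k) elA \<Rightarrow> ('i,'k) elA) \<Rightarrow> bool" where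
  "is_star_product a d q \<tau> c st \<longleftrightarrow>
     (\<forall>X\<in>Acar \<tau>. \<forall>Y\<in>Acar \<tau>. st X Y \<in> Acar \<tau>)
   \<and> (\<forall>X\<in>Acar \<tau>. \<forall>Y\<in>Acar \<tau>. \<forall>Z\<in>Acar \<tau>. st (st X Y) Z = st X (st Y Z))
   \<and> (\<forall>X\<in>Acar \<tau>. \<forall>Y\<in>Acar \<tau>. \<forall>Z\<in>Acar \<tau>.
        st (addA X Y) Z = addA (st X Z) (st Y Z) \<and> st Z (addA X Y) = addA (st Z X) (st Z Y))
   \<and> (\<forall>e. \<forall>X\<in>Acar \<tau>. \<forall>Y\<in>Acar \<tau>.
        st (smultA e X) Y = smultA e (st X Y) \<and> st X (smultA e Y) = smultA e (st X Y))
   \<and> (\<forall>h\<in>Hcar \<tau>. \<forall>g\<in>Tcar. st h g = HTmult h g \<and> st g h = THmult a d q g h)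
   \<and> (\<forall>k. \<forall>g\<in>Tcar. st (Fel k) g = Fstar_rhs a d q \<tau> c k g)"

end

theory Submission
  imports Defs
begin


lemma abstract_lin:
  fixes E :: "nat \<times> nat \<Rightarrow> ('i,'k::field) elA" and word :: "nat \<Rightarrow> nat \<Rightarrow> 'i list"
  assumes winj: "\<And>a b a' b'. word a b = word a' b' \<Longrightarrow> a = a' \<and> b = b'"
  and T1: "\<And>r s \<mu> w. E (r,s) \<mu> w \<noteq> 0 \<Longrightarrow> \<mu> = zeroQ \<and> (\<exists>a b. w = word a b \<and> (a+b < r+s \<or> (a = r \<and> b = s)))"
  and T2: "\<And>r s. E (r,s) zeroQ (word r s) = 1"
  shows "\<exists>!b. finite {p. b p \<noteq> 0} \<and> monoA (word m n) = (\<lambda>\<mu> w. \<Sum>p\<in>{p. b p \<noteq> 0}. b p * E p \<mu> w)"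
proof -
  define inS where "inS X \<longleftrightarrow> (\<exists>b A. finite A \<and> X = (\<lambda>\<mu> w. \<Sum>p\<in>A. b p * E p \<mu> w))" for X
  have T1': "E p \<mu> w \<noteq> 0 \<Longrightarrow> \<mu> = zeroQ \<and> (\<exists>a b. w = word a b \<and> (a+b < fst p + snd p \<or> (a,b) = p))" for p \<mu> w
    using T1[of "fst p" "snd p" \<mu> w] by (cases p) auto
  have ind: "\<forall>X. (\<forall>\<mu> w. X \<mu> w \<noteq> 0 \<longrightarrow> \<mu> = zeroQ \<and> (\<exists>a b. w = word a b \<and> a + b < N)) \<longrightarrow> inS X" for N
  proof (induction N)
    case 0
    show ?case
    proof (intro allI impI)
      fix X :: "('i,'k) elA"
      assume h: "\<forall>\<mu> w. X \<mu> w \<noteq> 0 \<longrightarrow> \<mu> = zeroQ \<and> (\<exists>a b. w = word a b \<and> a + b < 0)"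
      have "X \<mu> w = 0" for \<mu> w using h[rule_format, of \<mu> w] by (metis less_nat_zero_code)
      then have "X = (\<lambda>\<mu> w. \<Sum>p\<in>{}. (\<lambda>_. 0) p * E p \<mu> w)" by (simp add: fun_eq_iff)
      then show "inS X" unfolding inS_def by (intro exI[of _ "\<lambda>_. 0"] exI[of _ "{}"]) simp
    qed
  next
    case (Suc N)
    show ?case
    proof (intro allI impI)
      fix X :: "('i,'k) elA"
      assume h: "\<forall>\<mu> w. X \<mu> w \<noteq> 0 \<longrightarrow> \<mu> = zeroQ \<and> (\<exists>a b. w = word a b \<and> a + b < Suc N)"
      define D where "D = {p::nat\<times>nat. fst p + snd p = N}"
      have fD: "finite D" 
        by (rule finite_subset[of _ "{..N} \<times> {..N}"]) (auto simp: D_def)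
      define cf where "cf p = X zeroQ (word (fst p) (snd p))" for p
      define Y where "Y = (\<lambda>\<mu> w. X \<mu> w - (\<Sum>p\<in>D. cf p * E p \<mu> w))"
      have "\<forall>\<mu> w. Y \<mu> w \<noteq> 0 \<longrightarrow> \<mu> = zeroQ \<and> (\<exists>a b. w = word a b \<and> a + b < N)"
      proof (intro allI impI)
        fix \<mu> w assume Yne: "Y \<mu> w \<noteq> 0"
        show "\<mu> = zeroQ \<and> (\<exists>a b. w = word a b \<and> a + b < N)"
        proof (rule ccontr)
          assume nc: "\<not> (\<mu> = zeroQ \<and> (\<exists>a b. w = word a b \<and> a + b < N))"
          have "Y \<mu> w = 0"
          proof (cases "\<mu> = zeroQ \<and> (\<exists>a b. w = word a b \<and> a + b = N)")
            case True
            then obtain a b where mu: "\<mu> = zeroQ" and w: "w = word a b" and ab: "a + b = N" by blast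
            have inD: "(a,b) \<in> D" using ab by (simp add: D_def)
            have z: "cf p * E p \<mu> w = 0" if "p \<in> D - {(a,b)}" for p
            proof -
              have "E p \<mu> w = 0"
              proof (rule ccontr)
                assume "E p \<mu> w \<noteq> 0"
                from T1'[OF this] obtain a' b' where "w = word a' b'" and
                  "a'+b' < fst p + snd p \<or> (a',b') = p" by blast
                with winj[of a b a' b'] w that ab show False by (auto simp: D_def)
              qed
              then show ?thesis by simp
            qed
            have "(\<Sum>p\<in>D. cf p * E p \<mu> w) = cf (a,b) * E (a,b) \<mu> w + (\<Sum>p\<in>D - {(a,b)}. cf p * E p \<mu> w)"
              using sum.remove[OF fD inD] by blast
            also have "\<dots> = cf (a,b)" using sum.neutral[of "D - {(a,b)}" "\<lambda>p. cf p * E p \<mu> w"] z mu w T2 by simp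
            also have "\<dots> = X \<mu> w" using mu w by (simp add: cf_def)
            finally show ?thesis by (simp add: Y_def)
          next
            case False
            have x0: "X \<mu> w = 0"
            proof (rule ccontr)
              assume "X \<mu> w \<noteq> 0"
              with h obtain a b where "\<mu> = zeroQ" "w = word a b" "a + b < Suc N" by blast
              moreover have "a + b < N \<or> a + b = N" using \<open>a + b < Suc N\<close> by linarith
              ultimately show False using nc False by blast
            qed
            have e0: "E p \<mu> w = 0" if "p \<in> D" for p
            proof (rule ccontr)
              assume "E p \<mu> w \<noteq> 0"
              from T1'[OF this] obtain a' b' where "\<mu> = zeroQ" "w = word a' b'" and
                "a'+b' < fst p + snd p \<or> (a',b') = p" by blast
              moreover have "fst p + snd p = N" using that by (simp add: D_def)
              ultimately have "a' + b' < N \<or> a' + b' = N" by auto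
              then show False using nc False \<open>\<mu> = zeroQ\<close> \<open>w = word a' b'\<close> by blast
            qed
            show ?thesis using x0 e0 by (simp add: Y_def)
          qed
          with Yne show False by simp
        qed
      qed
      with Suc.IH have "inS Y" by blast
      then obtain bY AY where fA: "finite AY" and Yeq: "Y = (\<lambda>\<mu> w. \<Sum>p\<in>AY. bY p * E p \<mu> w)"
        unfolding inS_def by blast
      define b2 where "b2 p = (if p \<in> AY then bY p else 0) + (if p \<in> D then cf p else 0)" for p
      have "X = (\<lambda>\<mu> w. \<Sum>p\<in>AY \<union> D. b2 p * E p \<mu> w)"
      proof (intro ext)
        fix \<mu> w
        have "(\<Sum>p\<in>AY \<union> D. b2 p * E p \<mu> w) =
           (\<Sum>p\<in>AY \<union> D. (if p \<in> AY then bY p * E p \<mu> w else 0)) + (\<Sum>p\<in>AY \<union> D. (if p \<in> D then cf p * E p \<mu> w else 0))"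
          unfolding sum.distrib[symmetric] by (rule sum.cong) (auto simp: b2_def distrib_right)
        also have "\<dots> = (\<Sum>p\<in>(AY \<union> D) \<inter> AY. bY p * E p \<mu> w) + (\<Sum>p\<in>(AY \<union> D) \<inter> D. cf p * E p \<mu> w)"
          using fA fD by (simp only: sum.inter_restrict finite_Un)
        also have "(AY \<union> D) \<inter> AY = AY" by blast
        also have "(AY \<union> D) \<inter> D = D" by blast
        also have "(\<Sum>p\<in>AY. bY p * E p \<mu> w) = Y \<mu> w" by (simp add: Yeq)
        also have "Y \<mu> w + (\<Sum>p\<in>D. cf p * E p \<mu> w) = X \<mu> w" by (simp add: Y_def)
        finally show "X \<mu> w = (\<Sum>p\<in>AY \<union> D. b2 p * E p \<mu> w)" by simp
      qed
      then show "inS X" unfolding inS_def using fA fD by (intro exI[of _ b2] exI[of _ "AY \<union> D"]) simp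
    qed
  qed
  have "\<forall>\<mu> w. monoA (word m n) \<mu> w \<noteq> 0 \<longrightarrow> \<mu> = zeroQ \<and> (\<exists>a b. w = word a b \<and> a + b < Suc (m+n))"
    by (auto simp: monoA_def split: if_splits)
  then have "inS (monoA (word m n))"
    using ind[of "Suc (m+n)"] by blast
  then obtain b A where fA: "finite A" and Xe: "monoA (word m n) = (\<lambda>\<mu> w. \<Sum>p\<in>A. b p * E p \<mu> w)"
    unfolding inS_def by blast
  define b' where "b' p = (if p \<in> A then b p else 0)" for p
  have sub: "{p. b' p \<noteq> 0} \<subseteq> A" by (auto simp: b'_def)
  have fb': "finite {p. b' p \<noteq> 0}" using finite_subset[OF sub fA] .
  have ext_sum: "(\<Sum>p\<in>{p. bb p \<noteq> 0}. bb p * E p \<mu> w) = (\<Sum>p\<in>B. bb p * E p \<mu> w)"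
    if "finite B" "{p. bb p \<noteq> 0} \<subseteq> B" for bb B \<mu> w
    by (rule sum.mono_neutral_left) (use that in auto)
  have ex: "monoA (word m n) = (\<lambda>\<mu> w. \<Sum>p\<in>{p. b' p \<noteq> 0}. b' p * E p \<mu> w)"
    unfolding Xe by (intro ext, subst ext_sum[OF fA sub], simp add: b'_def)
  have uq: "b1 = b2"
    if f1: "finite {p. b1 p \<noteq> 0}" and e1: "monoA (word m n) = (\<lambda>\<mu> w. \<Sum>p\<in>{p. b1 p \<noteq> 0}. b1 p * E p \<mu> w)"
     and f2: "finite {p. b2 p \<noteq> 0}" and e2: "monoA (word m n) = (\<lambda>\<mu> w. \<Sum>p\<in>{p. b2 p \<noteq> 0}. b2 p * E p \<mu> w)"
    for b1 b2
  proof (rule ccontr)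
    assume ne: "b1 \<noteq> b2"
    define B where "B = {p. b1 p \<noteq> 0} \<union> {p. b2 p \<noteq> 0}"
    have fB: "finite B" using f1 f2 by (simp add: B_def)
    have zero: "(\<Sum>p\<in>B. (b1 p - b2 p) * E p \<mu> w) = 0" for \<mu> w
    proof -
      have "(\<Sum>p\<in>B. b1 p * E p \<mu> w) = (\<Sum>p\<in>B. b2 p * E p \<mu> w)"
        using fun_cong[OF fun_cong[OF e1, of \<mu>], of w] fun_cong[OF fun_cong[OF e2, of \<mu>], of w]
          ext_sum[OF fB, of b1] ext_sum[OF fB, of b2] by (simp add: B_def)
      then show ?thesis by (simp add: left_diff_distrib sum_subtractf)
    qed
    define S where "S = {p \<in> B. b1 p - b2 p \<noteq> 0}"
    have fS: "finite S" using fB by (simp add: S_def)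
    obtain p1 where "b1 p1 \<noteq> b2 p1" using ne by (auto simp: fun_eq_iff)
    then have "p1 \<in> S" by (auto simp: S_def B_def)
    then have Sne: "S \<noteq> {}" by blast
    define M where "M = Max ((\<lambda>p. fst p + snd p) ` S)"
    have "M \<in> (\<lambda>p. fst p + snd p) ` S"
      unfolding M_def using fS Sne by (intro Max_in) auto
    then obtain p0 where p0S: "p0 \<in> S" and p0M: "fst p0 + snd p0 = M" by blast
    have leM: "p \<in> S \<Longrightarrow> fst p + snd p \<le> M" for p using fS by (auto simp: M_def)
    have p0B: "p0 \<in> B" using p0S by (simp add: S_def)
    have z: "(b1 p - b2 p) * E p zeroQ (word (fst p0) (snd p0)) = 0" if "p \<in> B - {p0}" for p
    proof (cases "p \<in> S")
      case True
      have "E p zeroQ (word (fst p0) (snd p0)) = 0"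
      proof (rule ccontr)
        assume "E p zeroQ (word (fst p0) (snd p0)) \<noteq> 0"
        from T1'[OF this] obtain a' b' where "word (fst p0) (snd p0) = word a' b'" and
          "a'+b' < fst p + snd p \<or> (a',b') = p" by blast
        with winj[of "fst p0" "snd p0" a' b'] leM[OF True] p0M that show False by auto
      qed
      then show ?thesis by simp
    next
      case False
      then show ?thesis using that by (simp add: S_def)
    qed
    have "0 = (\<Sum>p\<in>B. (b1 p - b2 p) * E p zeroQ (word (fst p0) (snd p0)))" using zero by simp
    also have "\<dots> = (b1 p0 - b2 p0) * E p0 zeroQ (word (fst p0) (snd p0)) + (\<Sum>p\<in>B - {p0}. (b1 p - b2 p) * E p zeroQ (word (fst p0) (snd p0)))"
      using sum.remove[OF fB p0B] by blast
    also have "(\<Sum>p\<in>B - {p0}. (b1 p - b2 p) * E p zeroQ (word (fst p0) (snd p0))) = 0"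
      by (rule sum.neutral) (use z in blast)
    also have "(b1 p0 - b2 p0) * E p0 zeroQ (word (fst p0) (snd p0)) + 0 = b1 p0 - b2 p0"
      using T2[of "fst p0" "snd p0"] by simp
    finally show False using p0S by (simp add: S_def)
  qed
  show ?thesis
    by (rule ex1I[of _ b']) (use fb' ex uq in blast)+
qed



definition wrd :: "'i \<Rightarrow> 'i \<Rightarrow> nat \<Rightarrow> nat \<Rightarrow> 'i list" where
  "wrd i j a b = replicate a i @ j # replicate b i"

lemma wrd_inj:
  assumes "i \<noteq> j" "wrd i j a b = wrd i j a' b'" shows "a = a' \<and> b = b'"
proof -
  have tw: "takeWhile (\<lambda>x. x \<noteq> j) (wrd i j a b) = replicate a i" for a b
  proof -
    have "takeWhile (\<lambda>x. x \<noteq> j) (replicate a i @ j # replicate b i) = replicate a i @ takeWhile (\<lambda>x. x \<noteq> j) (j # replicate b i)"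
      by (rule takeWhile_append2) (use assms(1) in auto)
    then show ?thesis by (simp add: wrd_def)
  qed
  have "a = a'" using tw[of a b] tw[of a' b'] assms(2) by simp
  moreover have "length (wrd i j a b) = a + b + 1" for a b by (simp add: wrd_def)
  ultimately show ?thesis using assms(2) by (metis add_right_cancel add_left_cancel)
qed

lemma charw:
  assumes "i \<noteq> j" "set w \<subseteq> {i,j}" "count_list w j = 1"
  shows "\<exists>a b. w = wrd i j a b"
proof -
  obtain pre rest where w: "w = pre @ j # rest" and "j \<notin> set pre" and "count_list rest j = 0"
    using count_list_Suc_split_first[of w j 0] assms(3) by auto
  then have "j \<notin> set rest" by (simp add: count_list_0_iff)
  have "\<forall>y\<in>set pre. y = i" using assms(2) w \<open>j \<notin> set pre\<close> by auto
  then have p: "pre = replicate (length pre) i" by (simp add: replicate_length_same)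
  have "\<forall>y\<in>set rest. y = i" using assms(2) w \<open>j \<notin> set rest\<close> by auto
  then have r: "rest = replicate (length rest) i" by (simp add: replicate_length_same)
  show ?thesis using w p r unfolding wrd_def by metis
qed

lemma set_ins: "set w \<subseteq> set (take p w @ x # drop p w)"
proof -
  have "set w = set (take p w) \<union> set (drop p w)" by (metis append_take_drop_id set_append)
  then show ?thesis by auto
qed

lemma count_ins: "count_list (take p w @ x # drop p w) y = count_list w y + (if x = y then 1 else 0)"
proof -
  have "count_list w y = count_list (take p w @ drop p w) y" by simp
  then show ?thesis by (simp only: count_list_append count_list.simps) simp
qed

lemma length_ins: "p \<le> length w \<Longrightarrow> length (take p w @ x # drop p w) = Suc (length w)"
  by simp

lemma Fmul_ne: "Fmul k g w \<noteq> 0 \<Longrightarrow> \<exists>u. w = k # u \<and> g u \<noteq> 0"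
  by (cases w) (auto simp: Fmul_def split: if_splits)

lemma Fmul_Cons[simp]: "Fmul k g (k # u) = g u"
  by (simp add: Fmul_def)

lemma dL_ne: "dL a d q k g w \<noteq> 0 \<Longrightarrow> \<exists>p \<le> length w. g (take p w @ k # drop p w) \<noteq> 0"
proof (rule ccontr)
  assume "dL a d q k g w \<noteq> 0" and "\<not> (\<exists>p \<le> length w. g (take p w @ k # drop p w) \<noteq> 0)"
  then show False unfolding dL_def by (simp add: sum.neutral)
qed

lemma T_of_supp:
  assumes "finite A" "\<forall>\<mu> w. X \<mu> w \<noteq> 0 \<longrightarrow> \<mu> = zeroQ \<and> set w \<subseteq> A \<and> length w \<le> N"
  shows "X \<in> Tcar"
proof -
  have "{(\<mu>,w). X \<mu> w \<noteq> 0} \<subseteq> {zeroQ} \<times> {w. set w \<subseteq> A \<and> length w \<le> N}"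
    using assms(2) by auto
  moreover have "finite ({zeroQ} \<times> {w. set w \<subseteq> A \<and> length w \<le> N})"
    using finite_lists_length_le[OF assms(1)] by simp
  ultimately have "finite {(\<mu>,w). X \<mu> w \<noteq> 0}" by (rule finite_subset)
  then show ?thesis using assms(2) unfolding Tcar_def by blast
qed

lemma T_A: "X \<in> Tcar \<Longrightarrow> X \<in> Acar \<tau>"
proof -
  assume X: "X \<in> Tcar"
  have "zeroQ \<in> Gtheta \<tau>" unfolding Gtheta_def zeroQ_def
    by (intro CollectI exI[of _ "\<lambda>_. 0"]) simp
  then show ?thesis using X unfolding Tcar_def Acar_def by auto
qed

lemma T_zero: "X \<in> Tcar \<Longrightarrow> \<mu> \<noteq> zeroQ \<Longrightarrow> X \<mu> w = 0"
  unfolding Tcar_def by blast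

lemma oneA_T: "oneA \<in> Tcar"
  by (rule T_of_supp[of "{}" _ 0]) (auto simp: oneA_def split: if_splits)

lemma oneA_H: "oneA \<in> Hcar \<tau>"
  using T_A[OF oneA_T] unfolding Hcar_def by (auto simp: oneA_def split: if_splits)

lemma Fel_T: "Fel k \<in> Tcar"
  by (rule T_of_supp[of "{k}" _ 1]) (auto simp: Fel_def monoA_def split: if_splits)

lemma HT_one: fixes Y :: "('i,'k::field) elA" assumes "Y \<in> Tcar" shows "HTmult oneA Y = Y"
proof (intro ext)
  fix \<nu> w
  show "HTmult oneA Y \<nu> w = Y \<nu> w"
  proof (cases "\<nu> = zeroQ")
    case True then show ?thesis unfolding HTmult_def oneA_def by simp
  next
    case False then show ?thesis unfolding HTmult_def oneA_def using T_zero[OF assms False] by simp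
  qed
qed

locale LA =
  fixes a :: "'i::finite \<Rightarrow> 'i \<Rightarrow> int" and d :: "'i \<Rightarrow> nat"
    and q :: "'k::field" and \<tau> :: "'i \<Rightarrow> 'i" and c :: "'i \<Rightarrow> 'k"
    and st :: "('i,'k) elA \<Rightarrow> ('i,'k) elA \<Rightarrow> ('i,'k) elA"
    and i j :: 'i
  assumes star: "is_star_product a d q \<tau> c st"
    and ti: "\<tau> i = i" and ij: "i \<noteq> j" and tt: "\<forall>k. \<tau> (\<tau> k) = k"
begin

lemma closed: "X \<in> Acar \<tau> \<Longrightarrow> Y \<in> Acar \<tau> \<Longrightarrow> st X Y \<in> Acar \<tau>"
  using star unfolding is_star_product_def by blast
lemma assoc: "X \<in> Acar \<tau> \<Longrightarrow> Y \<in> Acar \<tau> \<Longrightarrow> Z \<in> Acar \<tau> \<Longrightarrow> st (st X Y) Z = st X (st Y Z)"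
  using star unfolding is_star_product_def by blast
lemma HT: "h \<in> Hcar \<tau> \<Longrightarrow> g \<in> Tcar \<Longrightarrow> st h g = HTmult h g"
  using star unfolding is_star_product_def by blast
lemma FS: "g \<in> Tcar \<Longrightarrow> st (Fel k) g = Fstar_rhs a d q \<tau> c k g"
  using star unfolding is_star_product_def by blast

definition Ci where "Ci = c i * q powi bform a d (sroot i) (sroot i) / (q ^ d i - inverse (q ^ d i))"

lemma Fi_step: "g \<in> Tcar \<Longrightarrow> st (Fel i) g =
   (\<lambda>\<nu> w. if \<nu> = zeroQ then Fmul i (g zeroQ) w - Ci * dL a d q i (g zeroQ) w else 0)"
  unfolding FS Fstar_rhs_def Ci_def by (auto intro!: ext simp: ti zeroQ_def)

abbreviation P where "P s \<equiv> starpow st (Fel i) s"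

definition Ppred where "Ppred s X \<longleftrightarrow> (\<forall>\<mu> w. X \<mu> w \<noteq> 0 \<longrightarrow> \<mu> = zeroQ \<and> set w \<subseteq> {i} \<and> length w \<le> s)
   \<and> X zeroQ (replicate s i) = 1"

lemma Ppred_T: "Ppred s X \<Longrightarrow> X \<in> Tcar"
  unfolding Ppred_def by (rule T_of_supp[of "{i}"]) auto

lemma Ppred_step: assumes "Ppred s X" shows "Ppred (Suc s) (st (Fel i) X)"
proof -
  have XT: "X \<in> Tcar" using Ppred_T[OF assms] .
  have sup: "\<And>\<mu> w. X \<mu> w \<noteq> 0 \<Longrightarrow> \<mu> = zeroQ \<and> set w \<subseteq> {i} \<and> length w \<le> s"
    and lead: "X zeroQ (replicate s i) = 1" using assms unfolding Ppred_def by blast+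
  have A: "\<mu> = zeroQ \<and> set w \<subseteq> {i} \<and> length w \<le> Suc s" if ne: "st (Fel i) X \<mu> w \<noteq> 0" for \<mu> w
  proof -
    have mu: "\<mu> = zeroQ" and ne2: "Fmul i (X zeroQ) w \<noteq> 0 \<or> dL a d q i (X zeroQ) w \<noteq> 0"
    proof -
      have e: "st (Fel i) X \<mu> w = (if \<mu> = zeroQ then Fmul i (X zeroQ) w - Ci * dL a d q i (X zeroQ) w else 0)"
        by (simp add: Fi_step[OF XT])
      show "\<mu> = zeroQ" using ne e by (cases "\<mu> = zeroQ") auto
      show "Fmul i (X zeroQ) w \<noteq> 0 \<or> dL a d q i (X zeroQ) w \<noteq> 0" using ne e by (cases "\<mu> = zeroQ") auto
    qed
    from ne2 have "set w \<subseteq> {i} \<and> length w \<le> Suc s"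
    proof
      assume fm: "Fmul i (X zeroQ) w \<noteq> 0"
      obtain u where w: "w = i # u" and u: "X zeroQ u \<noteq> 0" using Fmul_ne[OF fm] by blast
      from sup[OF u] w show ?thesis by auto
    next
      assume "dL a d q i (X zeroQ) w \<noteq> 0"
      then obtain p where pl: "p \<le> length w" and "X zeroQ (take p w @ i # drop p w) \<noteq> 0" using dL_ne by blast
      from sup[OF this(2)] have "set (take p w @ i # drop p w) \<subseteq> {i}" "length (take p w @ i # drop p w) \<le> s" by auto
      moreover have "set w \<subseteq> set (take p w @ i # drop p w)"
        by (rule set_ins)
      ultimately show ?thesis using length_ins[OF pl, of i] by auto
    qed
    with mu show ?thesis by blast
  qed
  have "dL a d q i (X zeroQ) (replicate (Suc s) i) = 0"
  proof (rule ccontr)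
    assume "dL a d q i (X zeroQ) (replicate (Suc s) i) \<noteq> 0"
    then obtain p where pl: "p \<le> length (replicate (Suc s) i)" and "X zeroQ (take p (replicate (Suc s) i) @ i # drop p (replicate (Suc s) i)) \<noteq> 0" using dL_ne by blast
    from sup[OF this(2)] length_ins[OF pl, of i] show False by simp
  qed
  then have "st (Fel i) X zeroQ (replicate (Suc s) i) = 1"
    unfolding Fi_step[OF XT] using lead by simp
  with A show ?thesis unfolding Ppred_def by blast
qed

lemma P_props: "Ppred s (P s)"
proof (induction s)
  case 0
  show ?case unfolding Ppred_def by (auto simp: oneA_def split: if_splits)
next
  case (Suc s)
  then show ?case using Ppred_step by simp
qed

lemma P_T: "P s \<in> Tcar" using Ppred_T[OF P_props] .

definition H0 where "H0 s = st (Fel j) (P s)"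

lemma tj: "\<tau> j \<noteq> i" using tt ti ij by metis

lemma H0_eq: "H0 s = (\<lambda>\<nu> w. if \<nu> = zeroQ then Fmul j (P s zeroQ) w else 0)"
proof -
  have sup: "\<And>\<mu> w. P s \<mu> w \<noteq> 0 \<Longrightarrow> \<mu> = zeroQ \<and> set w \<subseteq> {i} \<and> length w \<le> s"
    using P_props unfolding Ppred_def by blast
  have "dL a d q (\<tau> j) (P s zeroQ) w = 0" for w
  proof (rule ccontr)
    assume "dL a d q (\<tau> j) (P s zeroQ) w \<noteq> 0"
    then obtain p where "P s zeroQ (take p w @ \<tau> j # drop p w) \<noteq> 0" using dL_ne by blast
    from sup[OF this] tj show False by auto
  qed
  then show ?thesis unfolding H0_def FS[OF P_T] Fstar_rhs_def by (auto intro!: ext)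
qed

definition tri where "tri r s X \<longleftrightarrow> (\<forall>\<mu> w. X \<mu> w \<noteq> 0 \<longrightarrow> \<mu> = zeroQ \<and> set w \<subseteq> {i,j} \<and> count_list w j = 1
     \<and> (length w < r+s+1 \<or> w = wrd i j r s)) \<and> X zeroQ (wrd i j r s) = 1"

lemma tri_T: assumes "tri r s X" shows "X \<in> Tcar"
proof (rule T_of_supp[of "{i,j}" _ "r+s+1"])
  show "\<forall>\<mu> w. X \<mu> w \<noteq> 0 \<longrightarrow> \<mu> = zeroQ \<and> set w \<subseteq> {i, j} \<and> length w \<le> r + s + 1"
  proof (intro allI impI)
    fix \<mu> w assume "X \<mu> w \<noteq> 0"
    then have h: "\<mu> = zeroQ \<and> set w \<subseteq> {i,j} \<and> (length w < r+s+1 \<or> w = wrd i j r s)"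
      using assms unfolding tri_def by blast
    moreover have "length (wrd i j r s) = r+s+1" by (simp add: wrd_def)
    ultimately show "\<mu> = zeroQ \<and> set w \<subseteq> {i, j} \<and> length w \<le> r + s + 1" by auto
  qed
qed simp

lemma tri_H0: "tri 0 s (H0 s)"
proof -
  have sup: "\<And>\<mu> w. P s \<mu> w \<noteq> 0 \<Longrightarrow> \<mu> = zeroQ \<and> set w \<subseteq> {i} \<and> length w \<le> s"
   and lead: "P s zeroQ (replicate s i) = 1"
    using P_props unfolding Ppred_def by blast+
  have A: "\<mu> = zeroQ \<and> set w \<subseteq> {i,j} \<and> count_list w j = 1 \<and> (length w < 0+s+1 \<or> w = wrd i j 0 s)"
    if ne: "H0 s \<mu> w \<noteq> 0" for \<mu> w
  proof -
    have mu: "\<mu> = zeroQ" and ne2: "Fmul j (P s zeroQ) w \<noteq> 0"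
      using ne unfolding H0_eq by (auto split: if_splits)
    then obtain u where w: "w = j # u" and "P s zeroQ u \<noteq> 0" using Fmul_ne[OF ne2] by blast
    from sup[OF this(2)] have u: "set u \<subseteq> {i}" "length u \<le> s" by auto
    then have "j \<notin> set u" using ij by auto
    then have "count_list w j = 1" using w by simp
    moreover have "length w < 0+s+1 \<or> w = wrd i j 0 s"
    proof (cases "length u = s")
      case True
      have "u = replicate (length u) i" using u(1) by (simp add: replicate_length_same[symmetric] subset_iff)
      then show ?thesis using True w by (simp add: wrd_def)
    next
      case False then show ?thesis using u w by simp
    qed
    ultimately show ?thesis using mu w u by auto
  qed
  have "H0 s zeroQ (wrd i j 0 s) = 1" unfolding H0_eq using lead by (simp add: wrd_def)
  with A show ?thesis unfolding tri_def by blast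
qed

lemma tri_step: assumes "tri r s X" shows "tri (Suc r) s (st (Fel i) X)"
proof -
  have XT: "X \<in> Tcar" using tri_T[OF assms] .
  have sup: "\<And>\<mu> w. X \<mu> w \<noteq> 0 \<Longrightarrow> \<mu> = zeroQ \<and> set w \<subseteq> {i,j} \<and> count_list w j = 1
     \<and> (length w < r+s+1 \<or> w = wrd i j r s)"
    and lead: "X zeroQ (wrd i j r s) = 1" using assms unfolding tri_def by blast+
  have A: "\<mu> = zeroQ \<and> set w \<subseteq> {i,j} \<and> count_list w j = 1 \<and> (length w < Suc r+s+1 \<or> w = wrd i j (Suc r) s)"
    if ne: "st (Fel i) X \<mu> w \<noteq> 0" for \<mu> w
  proof -
    have mu: "\<mu> = zeroQ" and ne2: "Fmul i (X zeroQ) w \<noteq> 0 \<or> dL a d q i (X zeroQ) w \<noteq> 0"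
    proof -
      have e: "st (Fel i) X \<mu> w = (if \<mu> = zeroQ then Fmul i (X zeroQ) w - Ci * dL a d q i (X zeroQ) w else 0)"
        by (simp add: Fi_step[OF XT])
      show "\<mu> = zeroQ" using ne e by (cases "\<mu> = zeroQ") auto
      show "Fmul i (X zeroQ) w \<noteq> 0 \<or> dL a d q i (X zeroQ) w \<noteq> 0" using ne e by (cases "\<mu> = zeroQ") auto
    qed
    from ne2 have "set w \<subseteq> {i,j} \<and> count_list w j = 1 \<and> (length w < Suc r+s+1 \<or> w = wrd i j (Suc r) s)"
    proof
      assume fm: "Fmul i (X zeroQ) w \<noteq> 0"
      obtain u where w: "w = i # u" and "X zeroQ u \<noteq> 0" using Fmul_ne[OF fm] by blast
      from sup[OF this(2)] have "set u \<subseteq> {i,j}" "count_list u j = 1" "length u < r+s+1 \<or> u = wrd i j r s" by auto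
      then show ?thesis using w ij by (auto simp: wrd_def)
    next
      assume "dL a d q i (X zeroQ) w \<noteq> 0"
      then obtain p where pl: "p \<le> length w" and xn: "X zeroQ (take p w @ i # drop p w) \<noteq> 0" using dL_ne by blast
      from sup[OF xn] have h: "set (take p w @ i # drop p w) \<subseteq> {i,j}"
        "count_list (take p w @ i # drop p w) j = 1"
        "length (take p w @ i # drop p w) < r+s+1 \<or> take p w @ i # drop p w = wrd i j r s" by auto
      have L: "length (take p w @ i # drop p w) = Suc (length w)" by (rule length_ins[OF pl])
      have lw: "length (wrd i j r s) = r+s+1" by (simp add: wrd_def)
      have "set w \<subseteq> set (take p w @ i # drop p w)"
        by (rule set_ins)
      moreover have "count_list w j = count_list (take p w @ i # drop p w) j"
        by (subst count_ins) (use ij in simp)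
      moreover have "length (take p w @ i # drop p w) \<le> r+s+1"
        using h(3)
      proof
        assume "length (take p w @ i # drop p w) < r+s+1" then show ?thesis by simp
      next
        assume eq: "take p w @ i # drop p w = wrd i j r s" show ?thesis by (simp only: eq lw)
      qed
      ultimately show ?thesis using h L by auto
    qed
    with mu show ?thesis by blast
  qed
  have "dL a d q i (X zeroQ) (wrd i j (Suc r) s) = 0"
  proof (rule ccontr)
    assume "dL a d q i (X zeroQ) (wrd i j (Suc r) s) \<noteq> 0"
    then obtain p where pl: "p \<le> length (wrd i j (Suc r) s)" and xn: "X zeroQ (take p (wrd i j (Suc r) s) @ i # drop p (wrd i j (Suc r) s)) \<noteq> 0" using dL_ne by blast
    have L: "length (take p (wrd i j (Suc r) s) @ i # drop p (wrd i j (Suc r) s)) = r+s+3"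
      using length_ins[OF pl, of i] by (simp add: wrd_def)
    have lw: "length (wrd i j r s) = r+s+1" by (simp add: wrd_def)
    from sup[OF xn] have "length (take p (wrd i j (Suc r) s) @ i # drop p (wrd i j (Suc r) s)) < r+s+1 \<or>
       take p (wrd i j (Suc r) s) @ i # drop p (wrd i j (Suc r) s) = wrd i j r s" by blast
    then show False
    proof
      assume eq: "take p (wrd i j (Suc r) s) @ i # drop p (wrd i j (Suc r) s) = wrd i j r s"
      show False using L lw unfolding eq by simp
    qed (use L in simp)
  qed
  moreover have "wrd i j (Suc r) s = i # wrd i j r s" by (simp add: wrd_def)
  ultimately have "st (Fel i) X zeroQ (wrd i j (Suc r) s) = 1"
    unfolding Fi_step[OF XT] using lead by simp
  with A show ?thesis unfolding tri_def by blast
qed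

lemma iter_tri: "tri r s (st (P r) (H0 s))"
proof (induction r)
  case 0
  have "H0 s \<in> Tcar" using tri_T[OF tri_H0] .
  then show ?case using tri_H0 by (simp add: HT[OF oneA_H] HT_one)
next
  case (Suc r)
  have "st (P (Suc r)) (H0 s) = st (Fel i) (st (P r) (H0 s))"
    by (simp, rule assoc) (rule T_A, rule Fel_T P_T tri_T[OF tri_H0])+
  then show ?case using tri_step[OF Suc.IH] by simp
qed

lemma E_tri: "tri r s (st (st (P r) (Fel j)) (P s))"
proof -
  have "st (st (P r) (Fel j)) (P s) = st (P r) (H0 s)"
    unfolding H0_def by (rule assoc) (rule T_A, rule Fel_T P_T)+
  then show ?thesis using iter_tri by simp
qed

lemma main: "\<exists>!b :: nat \<times> nat \<Rightarrow> 'k. finite {p. b p \<noteq> 0} \<and>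
           monoA (replicate m i @ j # replicate n i)
             = (\<lambda>\<mu> w. \<Sum>(r,s)\<in>{p. b p \<noteq> 0}.
                  b (r,s) * st (st (starpow st (Fel i) r) (Fel j)) (starpow st (Fel i) s) \<mu> w)"
proof -
  define E where "E p = st (st (P (fst p)) (Fel j)) (P (snd p))" for p
  have T1: "\<mu> = zeroQ \<and> (\<exists>a b. w = wrd i j a b \<and> (a+b < r+s \<or> (a = r \<and> b = s)))"
    if ne: "E (r,s) \<mu> w \<noteq> 0" for r s \<mu> w
  proof -
    have "tri r s (E (r,s))" unfolding E_def using E_tri by simp
    then have h: "\<mu> = zeroQ \<and> set w \<subseteq> {i,j} \<and> count_list w j = 1 \<and> (length w < r+s+1 \<or> w = wrd i j r s)"
      using ne unfolding tri_def by blast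
    then obtain a b where w: "w = wrd i j a b" using charw[OF ij] by blast
    have "length w = a+b+1" using w by (simp add: wrd_def)
    then have "a+b < r+s \<or> (a = r \<and> b = s)" using h w wrd_inj[OF ij] by auto
    then show ?thesis using h w by blast
  qed
  have T2: "E (r,s) zeroQ (wrd i j r s) = 1" for r s
    using E_tri[of r s] unfolding E_def tri_def by simp
  have "\<exists>!b. finite {p. b p \<noteq> 0} \<and> monoA (wrd i j m n) = (\<lambda>\<mu> w. \<Sum>p\<in>{p. b p \<noteq> 0}. b p * E p \<mu> w)"
    by (rule abstract_lin[of "wrd i j" E]) (use wrd_inj[OF ij] T1 T2 in blast)+
  then show ?thesis unfolding E_def wrd_def split_def by simp
qed

end

theorem lemma4p7:
  fixes a :: "'i::finite \<Rightarrow> 'i \<Rightarrow> int" and d :: "'i \<Rightarrow> nat"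
    and q :: "'k::field_char_0" and \<tau> :: "'i \<Rightarrow> 'i" and c :: "'i \<Rightarrow> 'k"
    and st :: "('i,'k) elA \<Rightarrow> ('i,'k) elA \<Rightarrow> ('i,'k) elA"
    and i j :: 'i and m n :: nat
  assumes "gen_cartan a" and "symmetrizer a d"
    and "q \<noteq> 0" and "\<forall>k. q ^ (2 * d k) \<noteq> 1"
    and "\<forall>k. \<tau> (\<tau> k) = k" and "\<forall>k l. a (\<tau> k) (\<tau> l) = a k l"
    and "\<forall>k. c k \<noteq> 0" and "\<forall>k. a k (\<tau> k) = 0 \<longrightarrow> c k = c (\<tau> k)"
    and "is_star_product a d q \<tau> c st"
    and "\<tau> i = i" and "i \<noteq> j"
  shows "\<exists>!b :: nat \<times> nat \<Rightarrow> 'k. finite {p. b p \<noteq> 0} \<and>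
           monoA (replicate m i @ j # replicate n i)
             = (\<lambda>\<mu> w. \<Sum>(r,s)\<in>{p. b p \<noteq> 0}.
                  b (r,s) * st (st (starpow st (Fel i) r) (Fel j)) (starpow st (Fel i) s) \<mu> w)"
  proof -
  interpret LA a d q \<tau> c st i j
    using assms by (unfold_locales) auto
  show ?thesis by (rule main)
qed

end
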